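(* Consider the nonlinear program described in the context and let $\alpha>0$. If MFCQ holds at $x^*\in\mathcal{C}$, then (i) $\mathcal{G}_\alpha(x^* )=0$ if and only if $x^*\in X_{KKT}$; and (ii) if $x^*\in X_{KKT}$, then $\Lambda_\alpha(x^* )$ equals the set of Lagrange multipliers of the program at $x^*$.
   Context: Let $f:\mathbb{R}^n\to\mathbb{R}$, $g:\mathbb{R}^n\to\mathbb{R}^m$, $h:\mathbb{R}^n\to\mathbb{R}^k$ be continuously differentiable; consider minimize $f(x)$ subject to $g(x)\le0$, $h(x)=0$ with feasible set $\mathcal{C}$; $I_0(x)=\{i:g_i(x)=0\}$. MFCQ at $x$: $\{\nabla h_j(x)\}_{j=1}^k$ linearly independent and some $\xi$ has $\nabla h_j(x)^\top\xi=0$ for all $j$ and $\nabla g_i(x)^\top\xi<0$ for $i\in I_0(x)$. $(u^*,v^* )\in\mathbb{R}^m\times\mathbb{R}^k$ are Lagrange multipliers at $x^*$ if $\nabla f(x^* )+\frac{\partial g}{\partial x}(x^* )^\top u^*+\frac{\partial h}{\partial x}(x^* )^\top v^*=0$, $g(x^* )\le0$, $h(x^* )=0$, $u^*\ge0$, $(u^* )^\top g(x^* )=0$; $X_{KKT}$ is the set of points admitting Lagrange multipliers. With $G=\frac{\partial g}{\partial x}(x)$, $H=\frac{\partial h}{\partial x}(x)$: $\mathcal{G}_\alpha(x)$ is the unique minimizer over $\xi$ of $\frac12\|\xi+\nabla f(x)\|^2$ subject to $G\xi\le-\alpha g(x)$, $H\xi=-\alpha h(x)$; $\Lambda_\alpha(x)$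 is the set of $(u,v)\in\mathbb{R}^m_{\ge0}\times\mathbb{R}^k$ for which some $\xi$ satisfies $\xi+\nabla f(x)+G^\top u+H^\top v=0$, $G\xi+\alpha g(x)\le0$, $H\xi+\alpha h(x)=0$, $u\ge0$, $u^\top(G\xi+\alpha g(x))=0$. *)

theory Defs
  imports "HOL-Analysis.Analysis"
begin

(* Constraint functions are indexed by natural numbers below m resp. k
   (so m = 0 or k = 0 is allowed).  df x is the gradient of f at x,
   dg x i the gradient of g_i at x (i-th row of dg/dx), dh x j likewise.
   Multiplier vectors u in R^m, v in R^k are represented by functions
   nat => real that vanish outside {..<m} resp. {..<k}. *)

definition feasible_set ::
  "('a::euclidean_space \<Rightarrow> nat \<Rightarrow> real) \<Rightarrow> nat \<Rightarrow> ('a \<Rightarrow> nat \<Rightarrow> real) \<Rightarrow> nat \<Rightarrow> 'a set" where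
  "feasible_set g m h k = {x. (\<forall>i<m. g x i \<le> 0) \<and> (\<forall>j<k. h x j = 0)}"

definition active_set :: "('a \<Rightarrow> nat \<Rightarrow> real) \<Rightarrow> nat \<Rightarrow> 'a \<Rightarrow> nat set" where
  "active_set g m x = {i. i < m \<and> g x i = 0}"

definition MFCQ ::
  "('a::euclidean_space \<Rightarrow> nat \<Rightarrow> real) \<Rightarrow> ('a \<Rightarrow> nat \<Rightarrow> 'a) \<Rightarrow> nat \<Rightarrow>
   ('a \<Rightarrow> nat \<Rightarrow> 'a) \<Rightarrow> nat \<Rightarrow> 'a \<Rightarrow> bool" where
  "MFCQ g dg m dh k x \<longleftrightarrow>
     (\<forall>c::nat \<Rightarrow> real. (\<Sum>j<k. c j *\<^sub>R dh x j) = 0 \<longrightarrow> (\<forall>j<k. c j = 0)) \<and>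
     (\<exists>\<xi>. (\<forall>j<k. dh x j \<bullet> \<xi> = 0) \<and> (\<forall>i\<in>active_set g m x. dg x i \<bullet> \<xi> < 0))"

definition lagrange_multipliers ::
  "('a::euclidean_space \<Rightarrow> 'a) \<Rightarrow> ('a \<Rightarrow> nat \<Rightarrow> real) \<Rightarrow> ('a \<Rightarrow> nat \<Rightarrow> 'a) \<Rightarrow> nat \<Rightarrow>
   ('a \<Rightarrow> nat \<Rightarrow> real) \<Rightarrow> ('a \<Rightarrow> nat \<Rightarrow> 'a) \<Rightarrow> nat \<Rightarrow> 'a \<Rightarrow> ((nat \<Rightarrow> real) \<times> (nat \<Rightarrow> real)) set" where
  "lagrange_multipliers df g dg m h dh k x =
     {(u, v). (\<forall>i\<ge>m. u i = 0) \<and> (\<forall>j\<ge>k. v j = 0) \<and>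
        df x + (\<Sum>i<m. u i *\<^sub>R dg x i) + (\<Sum>j<k. v j *\<^sub>R dh x j) = 0 \<and>
        (\<forall>i<m. g x i \<le> 0) \<and> (\<forall>j<k. h x j = 0) \<and>
        (\<forall>i<m. u i \<ge> 0) \<and> (\<Sum>i<m. u i * g x i) = 0}"

definition X_KKT ::
  "('a::euclidean_space \<Rightarrow> 'a) \<Rightarrow> ('a \<Rightarrow> nat \<Rightarrow> real) \<Rightarrow> ('a \<Rightarrow> nat \<Rightarrow> 'a) \<Rightarrow> nat \<Rightarrow>
   ('a \<Rightarrow> nat \<Rightarrow> real) \<Rightarrow> ('a \<Rightarrow> nat \<Rightarrow> 'a) \<Rightarrow> nat \<Rightarrow> 'a set" where
  "X_KKT df g dg m h dh k = {x. lagrange_multipliers df g dg m h dh k x \<noteq> {}}"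

definition qp_feasible ::
  "real \<Rightarrow> ('a::euclidean_space \<Rightarrow> nat \<Rightarrow> real) \<Rightarrow> ('a \<Rightarrow> nat \<Rightarrow> 'a) \<Rightarrow> nat \<Rightarrow>
   ('a \<Rightarrow> nat \<Rightarrow> real) \<Rightarrow> ('a \<Rightarrow> nat \<Rightarrow> 'a) \<Rightarrow> nat \<Rightarrow> 'a \<Rightarrow> 'a set" where
  "qp_feasible \<alpha> g dg m h dh k x =
     {\<xi>. (\<forall>i<m. dg x i \<bullet> \<xi> \<le> - \<alpha> * g x i) \<and> (\<forall>j<k. dh x j \<bullet> \<xi> = - \<alpha> * h x j)}"

definition G_alpha ::
  "real \<Rightarrow> ('a::euclidean_space \<Rightarrow> 'a) \<Rightarrow> ('a \<Rightarrow> nat \<Rightarrow> real) \<Rightarrow> ('a \<Rightarrow> nat \<Rightarrow> 'a) \<Rightarrow> nat \<Rightarrow>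
   ('a \<Rightarrow> nat \<Rightarrow> real) \<Rightarrow> ('a \<Rightarrow> nat \<Rightarrow> 'a) \<Rightarrow> nat \<Rightarrow> 'a \<Rightarrow> 'a" where
  "G_alpha \<alpha> df g dg m h dh k x =
     (THE \<xi>. \<xi> \<in> qp_feasible \<alpha> g dg m h dh k x \<and>
        (\<forall>\<eta>\<in>qp_feasible \<alpha> g dg m h dh k x.
            (1/2) * (norm (\<xi> + df x))\<^sup>2 \<le> (1/2) * (norm (\<eta> + df x))\<^sup>2))"

definition Lambda_alpha ::
  "real \<Rightarrow> ('a::euclidean_space \<Rightarrow> 'a) \<Rightarrow> ('a \<Rightarrow> nat \<Rightarrow> real) \<Rightarrow> ('a \<Rightarrow> nat \<Rightarrow> 'a) \<Rightarrow> nat \<Rightarrow>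
   ('a \<Rightarrow> nat \<Rightarrow> real) \<Rightarrow> ('a \<Rightarrow> nat \<Rightarrow> 'a) \<Rightarrow> nat \<Rightarrow> 'a \<Rightarrow> ((nat \<Rightarrow> real) \<times> (nat \<Rightarrow> real)) set" where
  "Lambda_alpha \<alpha> df g dg m h dh k x =
     {(u, v). (\<forall>i\<ge>m. u i = 0) \<and> (\<forall>j\<ge>k. v j = 0) \<and> (\<forall>i<m. u i \<ge> 0) \<and>
        (\<exists>\<xi>. \<xi> + df x + (\<Sum>i<m. u i *\<^sub>R dg x i) + (\<Sum>j<k. v j *\<^sub>R dh x j) = 0 \<and>
             (\<forall>i<m. dg x i \<bullet> \<xi> + \<alpha> * g x i \<le> 0) \<and>
             (\<forall>j<k. dh x j \<bullet> \<xi> + \<alpha> * h x j = 0) \<and>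
             (\<Sum>i<m. u i * (dg x i \<bullet> \<xi> + \<alpha> * g x i)) = 0)}"

end

theory Submission
  imports Defs
begin

lemma dist_neg_eq: "dist (- c) (y::'a::real_normed_vector) = norm (y + c)"
  by (metis add.commute dist_norm minus_add_distrib norm_minus_cancel diff_conv_add_uminus)

lemma kkt_vi:
  fixes df :: "'a::euclidean_space \<Rightarrow> 'a"
  assumes "(u,v) \<in> lagrange_multipliers df g dg m h dh k x"
    and "\<eta> \<in> qp_feasible \<alpha> g dg m h dh k x" and "\<alpha> \<ge> 0"
  shows "df x \<bullet> \<eta> \<ge> 0"
proof -
  from assms(1) have eq: "df x = - (\<Sum>i<m. u i *\<^sub>R dg x i) - (\<Sum>j<k. v j *\<^sub>R dh x j)"
    and h0: "\<forall>j<k. h x j = 0" and u0: "\<forall>i<m. u i \<ge> 0" and comp: "(\<Sum>i<m. u i * g x i) = 0"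
    unfolding lagrange_multipliers_def by (auto simp: algebra_simps eq_neg_iff_add_eq_0)
  from assms(2) have f1: "\<forall>i<m. dg x i \<bullet> \<eta> \<le> - \<alpha> * g x i" and f2: "\<forall>j<k. dh x j \<bullet> \<eta> = - \<alpha> * h x j"
    unfolding qp_feasible_def by auto
  have e1: "df x \<bullet> \<eta> = - (\<Sum>i<m. u i * (dg x i \<bullet> \<eta>)) - (\<Sum>j<k. v j * (dh x j \<bullet> \<eta>))"
    by (simp add: eq inner_diff_left inner_sum_left)
  have e2: "(\<Sum>j<k. v j * (dh x j \<bullet> \<eta>)) = 0"
    by (rule sum.neutral) (simp add: f2 h0)
  have e3: "(\<Sum>i<m. u i * (dg x i \<bullet> \<eta>)) \<le> (\<Sum>i<m. u i * (- \<alpha> * g x i))"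
  proof (rule sum_mono)
    fix i assume "i \<in> {..<m}"
    then show "u i * (dg x i \<bullet> \<eta>) \<le> u i * (- \<alpha> * g x i)"
      using f1 u0 by (intro mult_left_mono) auto
  qed
  have e4: "(\<Sum>i<m. u i * (- \<alpha> * g x i)) = - \<alpha> * (\<Sum>i<m. u i * g x i)"
    by (simp add: sum_distrib_left algebra_simps)
  show ?thesis using e1 e2 e3 e4 comp by simp
qed

lemma qp_closed_convex:
  fixes dg :: "'a::euclidean_space \<Rightarrow> nat \<Rightarrow> 'a"
  shows "closed (qp_feasible \<alpha> g dg m h dh k x)" "convex (qp_feasible \<alpha> g dg m h dh k x)"
proof -
  have eq: "qp_feasible \<alpha> g dg m h dh k x =
    (\<Inter>i\<in>{..<m}. {\<xi>. dg x i \<bullet> \<xi> \<le> - \<alpha> * g x i}) \<inter> (\<Inter>j\<in>{..<k}. {\<xi>. dh x j \<bullet> \<xi> = - \<alpha> * h x j})"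
    by (auto simp: qp_feasible_def)
  show "closed (qp_feasible \<alpha> g dg m h dh k x)" unfolding eq
    by (intro closed_Int closed_INT ballI closed_halfspace_le closed_hyperplane)
  show "convex (qp_feasible \<alpha> g dg m h dh k x)" unfolding eq
    by (intro convex_Int convex_INT ballI convex_halfspace_le convex_hyperplane)
qed

lemma G_cp:
  fixes df :: "'a::euclidean_space \<Rightarrow> 'a"
  assumes ne: "qp_feasible \<alpha> g dg m h dh k x \<noteq> {}"
  shows "G_alpha \<alpha> df g dg m h dh k x = closest_point (qp_feasible \<alpha> g dg m h dh k x) (- df x)"
proof -
  let ?P = "qp_feasible \<alpha> g dg m h dh k x"
  note cc = qp_closed_convex[of \<alpha> g dg m h dh k x]
  let ?c = "closest_point ?P (- df x)"
  show ?thesis unfolding G_alpha_def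
  proof (rule the_equality)
    show "?c \<in> ?P \<and> (\<forall>\<eta>\<in>?P. (1/2) * (norm (?c + df x))\<^sup>2 \<le> (1/2) * (norm (\<eta> + df x))\<^sup>2)"
      using closest_point_exists[OF cc(1) ne, of "- df x"]
      by (auto simp: dist_neg_eq intro: power_mono)
  next
    fix \<xi> assume a: "\<xi> \<in> ?P \<and> (\<forall>\<eta>\<in>?P. (1/2) * (norm (\<xi> + df x))\<^sup>2 \<le> (1/2) * (norm (\<eta> + df x))\<^sup>2)"
    show "\<xi> = ?c"
    proof (rule closest_point_unique[OF cc(2) cc(1)])
      show "\<xi> \<in> ?P" using a by blast
      show "\<forall>z\<in>?P. dist (- df x) \<xi> \<le> dist (- df x) z"
        using a by (auto simp: dist_neg_eq intro: power2_le_imp_le)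
    qed
  qed
qed


lemma cone_repr:
  fixes dg dh :: "nat \<Rightarrow> 'a::euclidean_space"
  assumes I: "I \<subseteq> {..<m}"
  shows "convex_cone hull (dg ` I \<union> dh ` {..<k} \<union> uminus ` dh ` {..<k}) \<subseteq>
    {(\<Sum>i<m. u i *\<^sub>R dg i) + (\<Sum>j<k. v j *\<^sub>R dh j) | u v. (\<forall>i. 0 \<le> u i) \<and> (\<forall>i. i \<notin> I \<longrightarrow> u i = 0)}"
    (is "_ \<subseteq> ?R")
proof (rule hull_minimal)
  have memR: "z \<in> ?R" if "z = (\<Sum>i<m. u i *\<^sub>R dg i) + (\<Sum>j<k. v j *\<^sub>R dh j)"
    "\<forall>i. 0 \<le> u i" "\<forall>i. i \<notin> I \<longrightarrow> u i = 0" for z u v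
    using that by blast
  have d1: "(\<Sum>l<m. (if l = i then 1 else 0) *\<^sub>R dg l) = dg i" if "i < m" for i
  proof -
    have "(\<Sum>l<m. (if l = i then 1 else 0) *\<^sub>R dg l) = (\<Sum>l<m. if l = i then dg l else 0)"
      by (rule sum.cong) auto
    also have "\<dots> = dg i" using that by (simp add: sum.delta)
    finally show ?thesis .
  qed
  have d2: "(\<Sum>l<k. (if l = j then c else 0) *\<^sub>R dh l) = c *\<^sub>R dh j" if "j < k" for j c
  proof -
    have "(\<Sum>l<k. (if l = j then c else 0) *\<^sub>R dh l) = (\<Sum>l<k. if l = j then c *\<^sub>R dh l else 0)"
      by (rule sum.cong) auto
    also have "\<dots> = c *\<^sub>R dh j" using that by (simp add: sum.delta)
    finally show ?thesis .
  qed
  show "dg ` I \<union> dh ` {..<k} \<union> uminus ` dh ` {..<k} \<subseteq> ?R"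
  proof (intro subsetI)
    fix z assume "z \<in> dg ` I \<union> dh ` {..<k} \<union> uminus ` dh ` {..<k}"
    then consider (a) i where "i \<in> I" "z = dg i" | (b) j where "j < k" "z = dh j"
      | (c) j where "j < k" "z = - dh j" by auto
    then show "z \<in> ?R"
    proof cases
      case a
      then have zeq: "z = (\<Sum>l<m. (if l = i then 1 else 0) *\<^sub>R dg l) + (\<Sum>j<k. (\<lambda>_. 0) j *\<^sub>R dh j)"
        using d1 I by auto
      show ?thesis by (rule memR[OF zeq]) (use a in auto)
    next
      case b
      then have zeq: "z = (\<Sum>l<m. (\<lambda>_. 0) l *\<^sub>R dg l) + (\<Sum>l<k. (if l = j then 1 else 0) *\<^sub>R dh l)"
        using d2[of j 1] by auto
      show ?thesis by (rule memR[OF zeq]) auto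
    next
      case c
      then have zeq: "z = (\<Sum>l<m. (\<lambda>_. 0) l *\<^sub>R dg l) + (\<Sum>l<k. (if l = j then -1 else 0) *\<^sub>R dh l)"
        using d2[of j "-1"] by auto
      show ?thesis by (rule memR[OF zeq]) auto
    qed
  qed
  show "convex_cone ?R"
    unfolding convex_cone_def
  proof (intro conjI)
    have "(0::'a) = (\<Sum>l<m. (\<lambda>_. 0) l *\<^sub>R dg l) + (\<Sum>l<k. (\<lambda>_. 0) l *\<^sub>R dh l)" by simp
    then have "0 \<in> ?R" by (rule memR) auto
    then show "?R \<noteq> {}" by blast
    show "convex ?R" unfolding convex_def
    proof (intro ballI allI impI)
      fix x y and a b :: real assume x: "x \<in> ?R" and y: "y \<in> ?R" and ab: "0 \<le> a" "0 \<le> b" "a + b = 1"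
      from x obtain u1 v1 where 1: "x = (\<Sum>i<m. u1 i *\<^sub>R dg i) + (\<Sum>j<k. v1 j *\<^sub>R dh j)"
        "\<forall>i. 0 \<le> u1 i" "\<forall>i. i \<notin> I \<longrightarrow> u1 i = 0" by blast
      from y obtain u2 v2 where 2: "y = (\<Sum>i<m. u2 i *\<^sub>R dg i) + (\<Sum>j<k. v2 j *\<^sub>R dh j)"
        "\<forall>i. 0 \<le> u2 i" "\<forall>i. i \<notin> I \<longrightarrow> u2 i = 0" by blast
      have "a *\<^sub>R x + b *\<^sub>R y = (\<Sum>i<m. (a * u1 i + b * u2 i) *\<^sub>R dg i) + (\<Sum>j<k. (a * v1 j + b * v2 j) *\<^sub>R dh j)"
        unfolding 1(1) 2(1) by (simp add: scaleR_sum_right sum.distrib scaleR_add_left scaleR_add_right)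
      moreover have "\<forall>i. 0 \<le> a * u1 i + b * u2 i" using 1 2 ab by simp
      moreover have "\<forall>i. i \<notin> I \<longrightarrow> a * u1 i + b * u2 i = 0" using 1 2 by simp
      ultimately show "a *\<^sub>R x + b *\<^sub>R y \<in> ?R" by (rule memR)
    qed
    show "conic ?R" unfolding conic_def
    proof (intro allI impI)
      fix x and c :: real assume x: "x \<in> ?R" and c: "0 \<le> c"
      from x obtain u1 v1 where 1: "x = (\<Sum>i<m. u1 i *\<^sub>R dg i) + (\<Sum>j<k. v1 j *\<^sub>R dh j)"
        "\<forall>i. 0 \<le> u1 i" "\<forall>i. i \<notin> I \<longrightarrow> u1 i = 0" by blast
      have "c *\<^sub>R x = (\<Sum>i<m. (c * u1 i) *\<^sub>R dg i) + (\<Sum>j<k. (c * v1 j) *\<^sub>R dh j)"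
        unfolding 1(1) by (simp add: scaleR_sum_right scaleR_add_right)
      moreover have "\<forall>i. 0 \<le> c * u1 i" using 1 c by simp
      moreover have "\<forall>i. i \<notin> I \<longrightarrow> c * u1 i = 0" using 1 by simp
      ultimately show "c *\<^sub>R x \<in> ?R" by (rule memR)
    qed
  qed
qed

theorem mainTheorem7:
  fixes f :: "real^'n \<Rightarrow> real" and df :: "real^'n \<Rightarrow> real^'n"
    and g :: "real^'n \<Rightarrow> nat \<Rightarrow> real" and dg :: "real^'n \<Rightarrow> nat \<Rightarrow> real^'n"
    and h :: "real^'n \<Rightarrow> nat \<Rightarrow> real" and dh :: "real^'n \<Rightarrow> nat \<Rightarrow> real^'n"
    and m k :: nat and \<alpha> :: real and xs :: "real^'n"
  assumes f_C1: "\<forall>x. (f has_derivative (\<lambda>d. df x \<bullet> d)) (at x)" "continuous_on UNIV df"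
    and g_C1: "\<forall>i<m. \<forall>x. ((\<lambda>y. g y i) has_derivative (\<lambda>d. dg x i \<bullet> d)) (at x)"
              "\<forall>i<m. continuous_on UNIV (\<lambda>x. dg x i)"
    and h_C1: "\<forall>j<k. \<forall>x. ((\<lambda>y. h y j) has_derivative (\<lambda>d. dh x j \<bullet> d)) (at x)"
              "\<forall>j<k. continuous_on UNIV (\<lambda>x. dh x j)"
    and alpha_pos: "\<alpha> > 0"
    and xs_feas: "xs \<in> feasible_set g m h k"
    and mfcq: "MFCQ g dg m dh k xs"
  shows "(G_alpha \<alpha> df g dg m h dh k xs = 0 \<longleftrightarrow> xs \<in> X_KKT df g dg m h dh k)
       \<and> (xs \<in> X_KKT df g dg m h dh k \<longrightarrow>
            Lambda_alpha \<alpha> df g dg m h dh k xs = lagrange_multipliers df g dg m h dh k xs)"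
  proof -
  let ?P = "qp_feasible \<alpha> g dg m h dh k xs"
  let ?LM = "lagrange_multipliers df g dg m h dh k xs"
  let ?G = "G_alpha \<alpha> df g dg m h dh k xs"
  let ?c = "df xs"
  from xs_feas have gle: "\<forall>i<m. g xs i \<le> 0" and heq: "\<forall>j<k. h xs j = 0"
    by (auto simp: feasible_set_def)
  have P0: "0 \<in> ?P" using gle heq alpha_pos
    by (auto simp: qp_feasible_def intro!: mult_nonneg_nonpos)
  have ne: "?P \<noteq> {}" using P0 by blast
  have Gcp: "?G = closest_point ?P (- ?c)" using G_cp[OF ne] by blast
  note cc = qp_closed_convex[of \<alpha> g dg m h dh k xs]
  have vi: "?c \<bullet> \<eta> \<ge> 0" if kkt: "xs \<in> X_KKT df g dg m h dh k" and eta: "\<eta> \<in> ?P" for \<eta>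
  proof -
    from kkt obtain u v where "(u, v) \<in> ?LM" unfolding X_KKT_def by auto
    then show ?thesis using kkt_vi eta alpha_pos by fastforce
  qed
  have i1: "?G = 0" if kkt: "xs \<in> X_KKT df g dg m h dh k"
  proof -
    have "0 = closest_point ?P (- ?c)"
    proof (rule closest_point_unique[OF cc(2) cc(1) P0], intro ballI)
      fix z assume z: "z \<in> ?P"
      have e: "(z + ?c) \<bullet> (z + ?c) = z \<bullet> z + 2 * (?c \<bullet> z) + ?c \<bullet> ?c"
        by (simp add: inner_add_left inner_add_right inner_commute)
      have "?c \<bullet> ?c \<le> (z + ?c) \<bullet> (z + ?c)" unfolding e using vi[OF kkt z] inner_ge_zero[of z] by linarith
      then show "dist (- ?c) 0 \<le> dist (- ?c) z" by (simp add: dist_neg_eq norm_le)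
    qed
    then show ?thesis using Gcp by simp
  qed
  have i2: "xs \<in> X_KKT df g dg m h dh k" if G0: "?G = 0"
  proof -
    have min: "\<forall>z\<in>?P. norm ?c \<le> norm (z + ?c)"
      using closest_point_exists(2)[OF cc(1) ne, of "- ?c"] G0 Gcp by (simp add: dist_neg_eq)
    define I where "I = active_set g m xs"
    have Im: "I \<subseteq> {..<m}" by (auto simp: I_def active_set_def)
    define S where "S = dg xs ` I \<union> dh xs ` {..<k} \<union> uminus ` dh xs ` {..<k}"
    have finS: "finite S" unfolding S_def using Im finite_subset by blast
    have incone: "- ?c \<in> convex_cone hull S"
    proof (rule ccontr)
      assume notin: "- ?c \<notin> convex_cone hull S"
      obtain a b where ab: "a \<bullet> (- ?c) < b" "\<forall>x\<in>convex_cone hull S. b < a \<bullet> x"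
        using separating_hyperplane_closed_point[OF convex_convex_cone_hull closed_convex_cone_hull[OF finS] notin]
        by blast
      have b0: "b < 0" using ab(2) convex_cone_hull_contains_0 by force
      have nonneg: "a \<bullet> s \<ge> 0" if s: "s \<in> S" for s
      proof (rule ccontr)
        assume "\<not> 0 \<le> a \<bullet> s"
        then have neg: "a \<bullet> s < 0" by simp
        define t where "t = b / (a \<bullet> s)"
        have t0: "0 \<le> t" unfolding t_def using neg b0 by (simp add: divide_nonpos_neg less_imp_le)
        have "t *\<^sub>R s \<in> convex_cone hull S"
          by (rule convex_cone_hull_mul[OF hull_inc[OF s] t0])
        then have "b < a \<bullet> (t *\<^sub>R s)" using ab(2) by blast
        also have "a \<bullet> (t *\<^sub>R s) = b" unfolding t_def using neg by simp
        finally show False by simp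
      qed
      define d where "d = - a"
      have d1: "dg xs i \<bullet> d \<le> 0" if "i \<in> I" for i
        using nonneg[of "dg xs i"] that unfolding S_def d_def by (simp add: inner_commute)
      have d2: "dh xs j \<bullet> d = 0" if "j < k" for j
        using nonneg[of "dh xs j"] nonneg[of "- dh xs j"] that unfolding S_def d_def
        by (simp add: inner_commute)
      have d3: "?c \<bullet> d < 0" using ab(1) b0 unfolding d_def by (simp add: inner_commute)
      have lim1: "((\<lambda>t. t * (d \<bullet> d) + 2 * (?c \<bullet> d)) \<longlongrightarrow> 0 * (d \<bullet> d) + 2 * (?c \<bullet> d)) (at_right 0)"
        by (intro tendsto_intros)
      have ev1: "\<forall>\<^sub>F t in at_right 0. t * (d \<bullet> d) + 2 * (?c \<bullet> d) < 0"
        by (rule order_tendstoD(2)[OF lim1]) (use d3 in simp)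
      have ev2: "\<forall>\<^sub>F t in at_right 0. \<forall>i\<in>{..<m} - I. t * (dg xs i \<bullet> d) < - \<alpha> * g xs i"
      proof (rule eventually_ball_finite, simp, intro ballI)
        fix i assume i: "i \<in> {..<m} - I"
        then have "g xs i < 0" using gle unfolding I_def active_set_def by force
        then have pos: "0 < - \<alpha> * g xs i" using alpha_pos by (simp add: mult_pos_neg)
        have lim: "((\<lambda>t. t * (dg xs i \<bullet> d)) \<longlongrightarrow> 0 * (dg xs i \<bullet> d)) (at_right 0)"
          by (intro tendsto_intros)
        show "\<forall>\<^sub>F t in at_right 0. t * (dg xs i \<bullet> d) < - \<alpha> * g xs i"
          by (rule order_tendstoD(2)[OF lim]) (use pos in simp)
      qed
      have ev3: "\<forall>\<^sub>F t in at_right (0::real). 0 < t" by (rule eventually_at_right_less)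
      have nb: "at_right (0::real) \<noteq> bot"
        by (metis trivial_limit_at_right_real trivial_limit_def eventually_False)
      obtain t where t: "t * (d \<bullet> d) + 2 * (?c \<bullet> d) < 0"
        "\<forall>i\<in>{..<m} - I. t * (dg xs i \<bullet> d) < - \<alpha> * g xs i" "0 < t"
        using eventually_happens'[OF nb 
          eventually_conj[OF ev1 eventually_conj[OF ev2 ev3]]] by blast
      have tP: "t *\<^sub>R d \<in> ?P" unfolding qp_feasible_def
      proof (intro CollectI conjI allI impI)
        fix i assume i: "i < m"
        show "dg xs i \<bullet> t *\<^sub>R d \<le> - \<alpha> * g xs i"
        proof (cases "i \<in> I")
          case True
          then have "g xs i = 0" unfolding I_def active_set_def by simp
          then show ?thesis using d1[OF True] t(3) by (simp add: mult_nonneg_nonpos)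
        next
          case False
          then show ?thesis using t(2) i by (simp add: less_imp_le)
        qed
      next
        fix j assume j: "j < k"
        show "dh xs j \<bullet> t *\<^sub>R d = - \<alpha> * h xs j" using d2[OF j] heq j by simp
      qed
      have e: "(t *\<^sub>R d + ?c) \<bullet> (t *\<^sub>R d + ?c) = t * (t * (d \<bullet> d) + 2 * (?c \<bullet> d)) + ?c \<bullet> ?c"
        by (simp add: inner_add_left inner_add_right inner_commute algebra_simps)
      have "t * (t * (d \<bullet> d) + 2 * (?c \<bullet> d)) < 0" using t(1) t(3) by (simp add: mult_pos_neg)
      then have "\<not> norm ?c \<le> norm (t *\<^sub>R d + ?c)" unfolding norm_le e by linarith
      then show False using min tP by blast
    qed
    have "- ?c \<in> {(\<Sum>i<m. u i *\<^sub>R dg xs i) + (\<Sum>j<k. v j *\<^sub>R dh xs j) | u v.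
        (\<forall>i. 0 \<le> u i) \<and> (\<forall>i. i \<notin> I \<longrightarrow> u i = 0)}"
      using cone_repr[OF Im, where dg="dg xs" and dh="dh xs" and k=k] incone unfolding S_def by blast
    then obtain u v where uv: "- ?c = (\<Sum>i<m. u i *\<^sub>R dg xs i) + (\<Sum>j<k. v j *\<^sub>R dh xs j)"
      "\<forall>i. 0 \<le> u i" "\<forall>i. i \<notin> I \<longrightarrow> u i = 0" by blast
    define u' where "u' = (\<lambda>i. if i < m then u i else 0)"
    define v' where "v' = (\<lambda>j. if j < k then v j else 0)"
    have s1: "(\<Sum>i<m. u' i *\<^sub>R dg xs i) = (\<Sum>i<m. u i *\<^sub>R dg xs i)" by (rule sum.cong) (auto simp: u'_def)
    have s2: "(\<Sum>j<k. v' j *\<^sub>R dh xs j) = (\<Sum>j<k. v j *\<^sub>R dh xs j)" by (rule sum.cong) (auto simp: v'_def)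
    have s3: "(\<Sum>i<m. u' i * g xs i) = 0"
    proof (rule sum.neutral, intro ballI)
      fix i assume "i \<in> {..<m}"
      then show "u' i * g xs i = 0" using uv(3) unfolding u'_def I_def active_set_def by auto
    qed
    have sumeq: "?c + (\<Sum>i<m. u i *\<^sub>R dg xs i) + (\<Sum>j<k. v j *\<^sub>R dh xs j) = 0"
    proof -
      have "?c + ((\<Sum>i<m. u i *\<^sub>R dg xs i) + (\<Sum>j<k. v j *\<^sub>R dh xs j)) = ?c + - ?c"
        using uv(1) by simp
      then show ?thesis by (simp add: add.assoc)
    qed
    have "(u', v') \<in> ?LM" unfolding lagrange_multipliers_def
      using s1 s2 s3 uv(2) sumeq gle heq by (auto simp: u'_def v'_def)
    then show ?thesis unfolding X_KKT_def by blast
  qed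
  have ii: "Lambda_alpha \<alpha> df g dg m h dh k xs = ?LM" if kkt: "xs \<in> X_KKT df g dg m h dh k"
  proof (intro set_eqI iffI)
    fix p assume p: "p \<in> Lambda_alpha \<alpha> df g dg m h dh k xs"
    obtain u v where puv: "p = (u, v)" by (cases p)
    from p obtain \<xi> where u0: "\<forall>i\<ge>m. u i = 0" and v0: "\<forall>j\<ge>k. v j = 0" and upos: "\<forall>i<m. u i \<ge> 0"
      and eq: "\<xi> + ?c + (\<Sum>i<m. u i *\<^sub>R dg xs i) + (\<Sum>j<k. v j *\<^sub>R dh xs j) = 0"
      and c1: "\<forall>i<m. dg xs i \<bullet> \<xi> + \<alpha> * g xs i \<le> 0"
      and c2: "\<forall>j<k. dh xs j \<bullet> \<xi> + \<alpha> * h xs j = 0"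
      and comp: "(\<Sum>i<m. u i * (dg xs i \<bullet> \<xi> + \<alpha> * g xs i)) = 0"
      unfolding puv Lambda_alpha_def by blast
    have xiP: "\<xi> \<in> ?P" using c1 c2 unfolding qp_feasible_def by (auto simp: algebra_simps)
    have cxi: "?c \<bullet> \<xi> \<ge> 0" by (rule vi[OF kkt xiP])
    have eq2: "\<xi> + ?c = - (\<Sum>i<m. u i *\<^sub>R dg xs i) - (\<Sum>j<k. v j *\<^sub>R dh xs j)"
      using eq by (simp add: algebra_simps eq_neg_iff_add_eq_0)
    have e1: "(\<xi> + ?c) \<bullet> \<xi> = - (\<Sum>i<m. u i * (dg xs i \<bullet> \<xi>)) - (\<Sum>j<k. v j * (dh xs j \<bullet> \<xi>))"
      unfolding eq2 by (simp add: inner_diff_left inner_sum_left)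
    have e2: "(\<Sum>j<k. v j * (dh xs j \<bullet> \<xi>)) = 0"
      by (rule sum.neutral) (use c2 heq in auto)
    have e3: "(\<Sum>i<m. u i * (dg xs i \<bullet> \<xi>)) = (\<Sum>i<m. u i * (dg xs i \<bullet> \<xi> + \<alpha> * g xs i)) - \<alpha> * (\<Sum>i<m. u i * g xs i)"
      by (simp add: sum_distrib_left algebra_simps sum_subtractf sum.distrib)
    have e4: "(\<Sum>i<m. u i * g xs i) \<le> 0"
      by (rule sum_nonpos) (use upos gle in \<open>auto intro: mult_nonneg_nonpos\<close>)
    have "(\<xi> + ?c) \<bullet> \<xi> = \<alpha> * (\<Sum>i<m. u i * g xs i)" using e1 e2 e3 comp by simp
    also have "\<dots> \<le> 0" using e4 alpha_pos by (simp add: mult_nonneg_nonpos)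
    finally have "\<xi> \<bullet> \<xi> + ?c \<bullet> \<xi> \<le> 0" by (simp add: inner_add_left)
    then have "\<xi> \<bullet> \<xi> \<le> 0" using cxi by linarith
    then have xi0: "\<xi> = 0" using inner_gt_zero_iff[of \<xi>] by linarith
    have "\<alpha> * (\<Sum>i<m. u i * g xs i) = 0" using comp unfolding xi0
      by (simp add: sum_distrib_left algebra_simps)
    then have sg: "(\<Sum>i<m. u i * g xs i) = 0" using alpha_pos by simp
    show "p \<in> ?LM" unfolding puv lagrange_multipliers_def
      using u0 v0 upos eq gle heq sg xi0 by (simp add: add.assoc)
  next
    fix p assume p: "p \<in> ?LM"
    obtain u v where puv: "p = (u, v)" by (cases p)
    from p have u0: "\<forall>i\<ge>m. u i = 0" and v0: "\<forall>j\<ge>k. v j = 0" and upos: "\<forall>i<m. u i \<ge> 0"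
      and eq: "?c + (\<Sum>i<m. u i *\<^sub>R dg xs i) + (\<Sum>j<k. v j *\<^sub>R dh xs j) = 0"
      and sg: "(\<Sum>i<m. u i * g xs i) = 0"
      unfolding puv lagrange_multipliers_def by blast+
    have c1: "\<forall>i<m. dg xs i \<bullet> 0 + \<alpha> * g xs i \<le> 0" using gle alpha_pos by (simp add: mult_nonneg_nonpos)
    have c2: "\<forall>j<k. dh xs j \<bullet> 0 + \<alpha> * h xs j = 0" using heq by simp
    have comp: "(\<Sum>i<m. u i * (dg xs i \<bullet> 0 + \<alpha> * g xs i)) = 0"
    proof -
      have "(\<Sum>i<m. u i * (dg xs i \<bullet> 0 + \<alpha> * g xs i)) = \<alpha> * (\<Sum>i<m. u i * g xs i)"
        by (simp add: sum_distrib_left algebra_simps)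
      then show ?thesis using sg by simp
    qed
    have "0 + ?c + (\<Sum>i<m. u i *\<^sub>R dg xs i) + (\<Sum>j<k. v j *\<^sub>R dh xs j) = 0" using eq by simp
    then show "p \<in> Lambda_alpha \<alpha> df g dg m h dh k xs" unfolding puv Lambda_alpha_def
      using u0 v0 upos c1 c2 comp by blast
  qed
  show ?thesis using i1 i2 ii by blast
qed

end
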